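(* Let $f:\Omega_D\to\mathbb{O}$ be a slice function, $p\in\Omega_D$, and $q=f(p)$. If $q\neq0$, then there exist $a,b\in\mathbb{O}\setminus\{0\}$ with $|b|=|a||q|$ such that the slice function $g=(f\cdot a)\cdot b$ satisfies $g(p)=|a|^2|q|^2>0$. Furthermore, if $p\notin\mathbb{R}\cup V(f'_s)$, one can take $a=\overline{f'_s(p)}$ and $b=f'_s(p)\,\overline q$.
   Context: Octonions $\mathbb{O}=\mathbb{H}+\ell\mathbb{H}$ (product $(a+\ell b)(c+\ell d)=(ac-d\bar b)+\ell(\bar a d+cb)$, conjugation $\overline{a+\ell b}=\bar a-\ell b$), identified with $\mathbb{R}^8$ with norm $|\cdot|$; $\mathbb S=\{I:I^2=-1\}$. $D\subset\mathbb{R}^2$ non-empty open, invariant under $(\alpha,\beta)\mapsto(\alpha,-\beta)$, $\Omega_D=\{\alpha+\beta I:(\alpha,\beta)\in D,I\in\mathbb S\}$, assumed connected. A slice function is $f(\alpha+\beta I)=F_1(\alpha,\beta)+IF_2(\alpha,\beta)$ for a stem function $(F_1,F_2):D\to\mathbb{O}^2$ ($F_1$ even, $F_2$ odd in $\beta$). For $c\in\mathbb{O}$, $f\cdot c$ is the slice function induced by $(F_1c,F_2c)$. The spherical derivative is $f'_s(\alpha+\beta I)=F_2(\alpha,\beta)/\beta$ on $\Omega_D\setminus\mathbb{R}$, and $V(f'_s)=\{x\in\Omega_D\setminus\mathbb{R}:f'_s(x)=0\}$. *)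

theory Defs
  imports "HOL-Analysis.Analysis"
begin

text \<open>Quaternions H = C + C j (Cayley-Dickson), octonions O = H + l H.
  As types these are products of complex numbers, so O carries the
  Euclidean structure (norm, topology) of R^8 from the library.\<close>

type_synonym quat = "complex \<times> complex"
type_synonym oct = "quat \<times> quat"

definition qmul :: "quat \<Rightarrow> quat \<Rightarrow> quat" where
  "qmul x y = (case x of (z1, z2) \<Rightarrow> case y of (w1, w2) \<Rightarrow>
      (z1 * w1 - z2 * cnj w2, z1 * w2 + z2 * cnj w1))"

definition qconj :: "quat \<Rightarrow> quat" where
  "qconj x = (case x of (z1, z2) \<Rightarrow> (cnj z1, - z2))"

definition omul :: "oct \<Rightarrow> oct \<Rightarrow> oct" where
  "omul x y = (case x of (a, b) \<Rightarrow> case y of (c, d) \<Rightarrow>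
      (qmul a c - qmul d (qconj b), qmul (qconj a) d + qmul c b))"

definition oconj :: "oct \<Rightarrow> oct" where
  "oconj x = (case x of (a, b) \<Rightarrow> (qconj a, - b))"

definition oreal :: "real \<Rightarrow> oct" where
  "oreal r = ((complex_of_real r, 0), 0)"

definition sphere_units :: "oct set" (\<open>\<bbbS>\<close>) where
  "\<bbbS> = {I. omul I I = oreal (-1)}"

definition OmegaD :: "(real \<times> real) set \<Rightarrow> oct set" where
  "OmegaD D = {oreal \<alpha> + \<beta> *\<^sub>R I | \<alpha> \<beta> I. (\<alpha>, \<beta>) \<in> D \<and> I \<in> \<bbbS>}"

definition slice_fun ::
  "(real \<times> real) set \<Rightarrow> (real \<times> real \<Rightarrow> oct) \<Rightarrow> (real \<times> real \<Rightarrow> oct) \<Rightarrow> (oct \<Rightarrow> oct) \<Rightarrow> bool" where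
  "slice_fun D F1 F2 f \<longleftrightarrow>
     (\<forall>\<alpha> \<beta>. (\<alpha>, \<beta>) \<in> D \<longrightarrow> F1 (\<alpha>, - \<beta>) = F1 (\<alpha>, \<beta>) \<and> F2 (\<alpha>, - \<beta>) = - F2 (\<alpha>, \<beta>)) \<and>
     (\<forall>\<alpha> \<beta> I. (\<alpha>, \<beta>) \<in> D \<longrightarrow> I \<in> \<bbbS> \<longrightarrow>
        f (oreal \<alpha> + \<beta> *\<^sub>R I) = F1 (\<alpha>, \<beta>) + omul I (F2 (\<alpha>, \<beta>)))"

definition sph_deriv :: "(real \<times> real) set \<Rightarrow> (real \<times> real \<Rightarrow> oct) \<Rightarrow> oct \<Rightarrow> oct" where
  "sph_deriv D F2 x = (SOME v. \<exists>\<alpha> \<beta> I. (\<alpha>, \<beta>) \<in> D \<and> I \<in> \<bbbS> \<and> \<beta> \<noteq> 0 \<and>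
       x = oreal \<alpha> + \<beta> *\<^sub>R I \<and> v = (1 / \<beta>) *\<^sub>R F2 (\<alpha>, \<beta>))"

definition V_sph :: "(real \<times> real) set \<Rightarrow> (real \<times> real \<Rightarrow> oct) \<Rightarrow> oct set" where
  "V_sph D F2 = {x \<in> OmegaD D - range oreal. sph_deriv D F2 x = 0}"

end

theory Submission
  imports Defs
begin


lemma oct_cases: obtains a b c d where "(x::oct) = ((a,b),(c,d))"
  by (metis prod.exhaust)

lemma cnorm_sq: "(complex_of_real (cmod z)) ^ 2 = z * cnj z"
  by (metis complex_norm_square of_real_power)

lemma oct_norm_sq: "norm (((a,b),(c,d))::oct) ^ 2 = cmod a ^2 + cmod b^2 + cmod c^2 + cmod d^2"
  by (simp add: norm_Pair)

lemma omul_conj_self: "omul x (oconj x) = oreal (norm x ^ 2)"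
proof -
  obtain a b c d where x: "x = ((a,b),(c,d))" by (rule oct_cases)
  show ?thesis unfolding x oct_norm_sq
    by (simp add: omul_def oconj_def qmul_def qconj_def oreal_def cnorm_sq zero_prod_def algebra_simps)
qed

lemma oconj_omul: "oconj (omul x y) = omul (oconj y) (oconj x)"
proof -
  obtain a b c d where x: "x = ((a,b),(c,d))" by (rule oct_cases)
  obtain a' b' c' d' where y: "y = ((a',b'),(c',d'))" by (rule oct_cases)
  show ?thesis unfolding x y
    by (simp add: omul_def oconj_def qmul_def qconj_def algebra_simps)
qed

lemma omul_alt: "omul (omul x y) (oconj y) = (norm y ^ 2) *\<^sub>R x"
proof -
  obtain a b c d where x: "x = ((a,b),(c,d))" by (rule oct_cases)
  obtain a' b' c' d' where y: "y = ((a',b'),(c',d'))" by (rule oct_cases)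
  show ?thesis unfolding x y oct_norm_sq
    by (simp add: omul_def oconj_def qmul_def qconj_def scaleR_conv_of_real cnorm_sq algebra_simps)
qed

lemma norm_omul_sq: "norm (omul x y) ^ 2 = norm x ^ 2 * norm y ^ 2"
proof -
  obtain a b c d where x: "x = ((a,b),(c,d))" by (rule oct_cases)
  obtain a' b' c' d' where y: "y = ((a',b'),(c',d'))" by (rule oct_cases)
  have "complex_of_real (norm (omul x y) ^ 2) = complex_of_real (norm x ^ 2 * norm y ^ 2)"
    unfolding x y omul_def qmul_def qconj_def
    by (simp add: norm_Pair cnorm_sq algebra_simps)
  then show ?thesis using of_real_eq_iff by blast
qed


lemma omul_diff_left: "omul (x - y) z = omul x z - omul y z"
  by (cases x, cases y, cases z) (auto simp: omul_def qmul_def qconj_def algebra_simps)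
lemma omul_add_left: "omul (x + y) z = omul x z + omul y z"
  by (cases x, cases y, cases z) (auto simp: omul_def qmul_def qconj_def algebra_simps)
lemma omul_scaleR_left: "omul (r *\<^sub>R x) z = r *\<^sub>R omul x z"
  by (cases x, cases z) (auto simp: omul_def qmul_def qconj_def scaleR_conv_of_real algebra_simps)
lemma omul_scaleR_right: "omul x (r *\<^sub>R z) = r *\<^sub>R omul x z"
  by (cases x, cases z) (auto simp: omul_def qmul_def qconj_def scaleR_conv_of_real algebra_simps)
lemma omul_oreal_left: "omul (oreal r) x = r *\<^sub>R x"
  by (cases x) (auto simp: omul_def qmul_def qconj_def oreal_def zero_prod_def scaleR_conv_of_real algebra_simps)
lemma oconj_oconj: "oconj (oconj x) = x"
  by (cases x) (auto simp: oconj_def qconj_def)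
lemma norm_oconj: "norm (oconj x) = norm x"
proof -
  obtain a b c d where x: "x = ((a,b),(c,d))" by (rule oct_cases)
  show ?thesis unfolding x by (simp add: oconj_def qconj_def norm_Pair)
qed
lemma oconj_eq0: "oconj x = 0 \<longleftrightarrow> x = 0"
  by (metis norm_eq_zero norm_oconj)
lemma norm_omul: "norm (omul x y) = norm x * norm y"
  using norm_omul_sq[of x y]
  by (metis norm_ge_zero power_mult_distrib real_sqrt_abs real_sqrt_unique abs_of_nonneg zero_le_mult_iff)
lemma norm_oreal: "norm (oreal r) = \<bar>r\<bar>"
  by (simp add: oreal_def norm_Pair zero_prod_def)

lemma key:
  assumes "F1 + omul J F2 = q" "F2 = \<beta> *\<^sub>R v"
  shows "omul (omul F1 (oconj v)) (omul v (oconj q)) +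
         omul J (omul (omul F2 (oconj v)) (omul v (oconj q))) = oreal (norm v ^ 2 * norm q ^ 2)"
proof -
  have F1: "F1 = q - \<beta> *\<^sub>R omul J v" using assms by (auto simp: omul_scaleR_right algebra_simps)
  have vq: "omul v (oconj q) = oconj (omul q (oconj v))" by (simp add: oconj_omul oconj_oconj)
  have a: "omul F1 (oconj v) = omul q (oconj v) - (\<beta> * norm v ^ 2) *\<^sub>R J"
    unfolding F1 omul_diff_left omul_scaleR_left omul_alt by simp
  have b: "omul F2 (oconj v) = oreal (\<beta> * norm v ^ 2)"
    unfolding assms(2) omul_scaleR_left omul_conj_self
    by (simp add: oreal_def scaleR_conv_of_real zero_prod_def)
  have c: "omul (omul q (oconj v)) (omul v (oconj q)) = oreal (norm v ^ 2 * norm q ^ 2)"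
    unfolding vq omul_conj_self norm_omul norm_oconj by (simp add: power_mult_distrib mult.commute)
  show ?thesis
    unfolding a b omul_diff_left omul_scaleR_left omul_oreal_left omul_scaleR_right c by simp
qed


lemma sphere_prop:
  assumes "I \<in> \<bbbS>" shows "Re (fst (fst I)) = 0 \<and> norm I = 1"
proof -
  obtain x1 y1 x2 y2 x3 y3 x4 y4 where I: "I = ((Complex x1 y1, Complex x2 y2), (Complex x3 y3, Complex x4 y4))"
    by (metis oct_cases complex.exhaust)
  from assms have e: "omul I I = oreal (-1)" by (simp add: sphere_units_def)
  then have eqs: "x1*x1 - y1*y1 - x2*x2 - y2*y2 - x3*x3 - y3*y3 - x4*x4 - y4*y4 = -1"
     "x1*y1 = 0" "x1 * x2 = 0" "x1*y2 = 0" "x1*x3 = 0" "x1*y3=0" "x1*x4=0" "x1*y4=0"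
    unfolding I by (auto simp: omul_def qmul_def qconj_def oreal_def complex_eq_iff zero_prod_def algebra_simps)
  have x1: "x1 = 0"
  proof (rule ccontr)
    assume "x1 \<noteq> 0"
    with eqs have "y1 = 0" "x2 = 0" "y2=0" "x3=0" "y3=0" "x4=0" "y4=0" by auto
    with eqs(1) have "x1*x1 = -1" by simp
    moreover have "x1*x1 \<ge> 0" by simp
    ultimately show False by linarith
  qed
  have "norm I ^ 2 = 1" unfolding I oct_norm_sq using eqs(1) x1
    by (simp add: cmod_def power2_eq_square)
  then have "norm I = 1" using norm_ge_zero[of I] by (auto simp add: power2_eq_1_iff)
  with x1 show ?thesis unfolding I by simp
qed

lemma re_lin: "Re (fst (fst (oreal a + b *\<^sub>R I))) = a + b * Re (fst (fst I))"
  by (simp add: oreal_def)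

lemma sph_eq:
  assumes D: "(\<alpha>, \<beta>) \<in> D" and I: "I \<in> \<bbbS>" and b0: "\<beta> \<noteq> 0"
    and odd: "\<forall>\<alpha> \<beta>. (\<alpha>, \<beta>) \<in> D \<longrightarrow> F2 (\<alpha>, - \<beta>) = - F2 (\<alpha>, \<beta>)"
    and p: "p = oreal \<alpha> + \<beta> *\<^sub>R I"
  shows "sph_deriv D F2 p = (1 / \<beta>) *\<^sub>R F2 (\<alpha>, \<beta>)"
proof -
  let ?P = "\<lambda>v. \<exists>\<alpha> \<beta> I. (\<alpha>, \<beta>) \<in> D \<and> I \<in> \<bbbS> \<and> \<beta> \<noteq> 0 \<and>
       p = oreal \<alpha> + \<beta> *\<^sub>R I \<and> v = (1 / \<beta>) *\<^sub>R F2 (\<alpha>, \<beta>)"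
  have ex: "?P ((1 / \<beta>) *\<^sub>R F2 (\<alpha>, \<beta>))" using assms by blast
  have uniq: "v = (1 / \<beta>) *\<^sub>R F2 (\<alpha>, \<beta>)" if "?P v" for v
  proof -
    from that obtain \<alpha>' \<beta>' I' where h: "(\<alpha>', \<beta>') \<in> D" "I' \<in> \<bbbS>" "\<beta>' \<noteq> 0"
      "p = oreal \<alpha>' + \<beta>' *\<^sub>R I'" "v = (1 / \<beta>') *\<^sub>R F2 (\<alpha>', \<beta>')" by blast
    have "Re (fst (fst p)) = \<alpha>"
      unfolding p re_lin using sphere_prop[OF I] by simp
    moreover have "Re (fst (fst p)) = \<alpha>'"
      unfolding h(4) re_lin using sphere_prop[OF h(2)] by simp
    ultimately have aa: "\<alpha>' = \<alpha>" by simp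
    then have bb: "\<beta> *\<^sub>R I = \<beta>' *\<^sub>R I'" using p h(4) by simp
    then have "\<bar>\<beta>\<bar> = \<bar>\<beta>'\<bar>" using sphere_prop[OF I] sphere_prop[OF h(2)]
      by (metis norm_scaleR mult.right_neutral)
    then consider "\<beta>' = \<beta>" | "\<beta>' = - \<beta>" by linarith
    then show ?thesis
    proof cases
      case 1 then show ?thesis using h aa by simp
    next
      case 2 then show ?thesis using h aa odd D by simp
    qed
  qed
  show ?thesis unfolding sph_deriv_def
    using someI[of ?P, OF ex] uniq by blast
qed


lemma good_choice:
  assumes D: "(\<alpha>, \<beta>) \<in> D" and J: "J \<in> \<bbbS>" and p: "p = oreal \<alpha> + \<beta> *\<^sub>R J"
    and q: "F1 (\<alpha>, \<beta>) + omul J (F2 (\<alpha>, \<beta>)) = q" and qnz: "q \<noteq> 0"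
    and F2: "F2 (\<alpha>, \<beta>) = c *\<^sub>R v" and vnz: "v \<noteq> 0"
  shows "oconj v \<noteq> 0 \<and> omul v (oconj q) \<noteq> 0 \<and> norm (omul v (oconj q)) = norm (oconj v) * norm q \<and>
            (\<forall>g. slice_fun D (\<lambda>z. omul (omul (F1 z) (oconj v)) (omul v (oconj q)))
                  (\<lambda>z. omul (omul (F2 z) (oconj v)) (omul v (oconj q))) g \<longrightarrow>
                 g p = oreal ((norm (oconj v))\<^sup>2 * (norm q)\<^sup>2)) \<and>
            (norm (oconj v))\<^sup>2 * (norm q)\<^sup>2 > 0"
proof (intro conjI allI impI)
  show "oconj v \<noteq> 0" using vnz oconj_eq0 by blast
  show "norm (omul v (oconj q)) = norm (oconj v) * norm q" by (simp add: norm_omul norm_oconj)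
  then show "omul v (oconj q) \<noteq> 0" using vnz qnz by (metis mult_eq_0_iff norm_eq_zero norm_oconj)
  show "(norm (oconj v))\<^sup>2 * (norm q)\<^sup>2 > 0" using vnz qnz by (simp add: norm_oconj)
  fix g assume "slice_fun D (\<lambda>z. omul (omul (F1 z) (oconj v)) (omul v (oconj q)))
                  (\<lambda>z. omul (omul (F2 z) (oconj v)) (omul v (oconj q))) g"
  then have "g p = omul (omul (F1 (\<alpha>, \<beta>)) (oconj v)) (omul v (oconj q)) +
      omul J (omul (omul (F2 (\<alpha>, \<beta>)) (oconj v)) (omul v (oconj q)))"
    unfolding slice_fun_def p using D J by blast
  also have "... = oreal (norm v ^ 2 * norm q ^ 2)" by (rule key[OF q F2])
  finally show "g p = oreal ((norm (oconj v))\<^sup>2 * (norm q)\<^sup>2)" by (simp add: norm_oconj)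
qed


theorem corollary3p11:
  fixes D :: "(real \<times> real) set"
    and F1 F2 :: "real \<times> real \<Rightarrow> oct" and f :: "oct \<Rightarrow> oct" and p :: oct
  assumes D_open: "open D" and D_ne: "D \<noteq> {}"
    and D_sym: "\<forall>\<alpha> \<beta>. (\<alpha>, \<beta>) \<in> D \<longrightarrow> (\<alpha>, - \<beta>) \<in> D"
    and Omega_conn: "connected (OmegaD D)"
    and f_slice: "slice_fun D F1 F2 f"
    and p_in: "p \<in> OmegaD D"
    and q_nz: "f p \<noteq> 0"
  shows "(\<exists>a b. a \<noteq> 0 \<and> b \<noteq> 0 \<and> norm b = norm a * norm (f p) \<and>
            (\<forall>g. slice_fun D (\<lambda>z. omul (omul (F1 z) a) b) (\<lambda>z. omul (omul (F2 z) a) b) g \<longrightarrow>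
                 g p = oreal ((norm a)\<^sup>2 * (norm (f p))\<^sup>2)) \<and>
            (norm a)\<^sup>2 * (norm (f p))\<^sup>2 > 0)
       \<and> (p \<notin> range oreal \<union> V_sph D F2 \<longrightarrow>
            (let a = oconj (sph_deriv D F2 p); b = omul (sph_deriv D F2 p) (oconj (f p)) in
              a \<noteq> 0 \<and> b \<noteq> 0 \<and> norm b = norm a * norm (f p) \<and>
              (\<forall>g. slice_fun D (\<lambda>z. omul (omul (F1 z) a) b) (\<lambda>z. omul (omul (F2 z) a) b) g \<longrightarrow>
                   g p = oreal ((norm a)\<^sup>2 * (norm (f p))\<^sup>2)) \<and>
              (norm a)\<^sup>2 * (norm (f p))\<^sup>2 > 0))"
  proof -
  obtain \<alpha> \<beta> J where D: "(\<alpha>, \<beta>) \<in> D" and J: "J \<in> \<bbbS>" and p: "p = oreal \<alpha> + \<beta> *\<^sub>R J"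
    using p_in unfolding OmegaD_def by blast
  have odd: "\<forall>\<alpha> \<beta>. (\<alpha>, \<beta>) \<in> D \<longrightarrow> F2 (\<alpha>, - \<beta>) = - F2 (\<alpha>, \<beta>)"
    using f_slice unfolding slice_fun_def by blast
  have q: "F1 (\<alpha>, \<beta>) + omul J (F2 (\<alpha>, \<beta>)) = f p"
    using f_slice D J unfolding slice_fun_def p by metis
  have part1: "\<exists>a b. a \<noteq> 0 \<and> b \<noteq> 0 \<and> norm b = norm a * norm (f p) \<and>
            (\<forall>g. slice_fun D (\<lambda>z. omul (omul (F1 z) a) b) (\<lambda>z. omul (omul (F2 z) a) b) g \<longrightarrow>
                 g p = oreal ((norm a)\<^sup>2 * (norm (f p))\<^sup>2)) \<and>
            (norm a)\<^sup>2 * (norm (f p))\<^sup>2 > 0"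
  proof (cases "F2 (\<alpha>, \<beta>) = 0")
    case True
    have "F2 (\<alpha>, \<beta>) = 0 *\<^sub>R oreal 1" "oreal 1 \<noteq> 0"
      using True by (auto simp: oreal_def zero_prod_def)
    from good_choice[where ?F1.0=F1 and ?F2.0=F2, OF D J p q q_nz this] show ?thesis by blast
  next
    case False
    have "F2 (\<alpha>, \<beta>) = 1 *\<^sub>R F2 (\<alpha>, \<beta>)" by simp
    from good_choice[where ?F1.0=F1 and ?F2.0=F2, OF D J p q q_nz this False] show ?thesis by blast
  qed
  have part2: "p \<notin> range oreal \<union> V_sph D F2 \<longrightarrow>
            (let a = oconj (sph_deriv D F2 p); b = omul (sph_deriv D F2 p) (oconj (f p)) in
              a \<noteq> 0 \<and> b \<noteq> 0 \<and> norm b = norm a * norm (f p) \<and>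
              (\<forall>g. slice_fun D (\<lambda>z. omul (omul (F1 z) a) b) (\<lambda>z. omul (omul (F2 z) a) b) g \<longrightarrow>
                   g p = oreal ((norm a)\<^sup>2 * (norm (f p))\<^sup>2)) \<and>
              (norm a)\<^sup>2 * (norm (f p))\<^sup>2 > 0)"
  proof
    assume np: "p \<notin> range oreal \<union> V_sph D F2"
    have b0: "\<beta> \<noteq> 0" using np p by auto
    have sd: "sph_deriv D F2 p = (1 / \<beta>) *\<^sub>R F2 (\<alpha>, \<beta>)" by (rule sph_eq[OF D J b0 odd p])
    have nz: "sph_deriv D F2 p \<noteq> 0" using np p_in unfolding V_sph_def by blast
    have "F2 (\<alpha>, \<beta>) = \<beta> *\<^sub>R sph_deriv D F2 p" using sd b0 by simp
    from good_choice[where ?F1.0=F1 and ?F2.0=F2, OF D J p q q_nz this nz] show "let a = oconj (sph_deriv D F2 p); b = omul (sph_deriv D F2 p) (oconj (f p)) in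
              a \<noteq> 0 \<and> b \<noteq> 0 \<and> norm b = norm a * norm (f p) \<and>
              (\<forall>g. slice_fun D (\<lambda>z. omul (omul (F1 z) a) b) (\<lambda>z. omul (omul (F2 z) a) b) g \<longrightarrow>
                   g p = oreal ((norm a)\<^sup>2 * (norm (f p))\<^sup>2)) \<and>
              (norm a)\<^sup>2 * (norm (f p))\<^sup>2 > 0" unfolding Let_def by blast
  qed
  from part1 part2 show ?thesis by blast
qed

end
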